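(* Let $t$ be an $\mathrm{SL}_2$-tiling, and let $i<j$ and $p<q$ be integers. Then $t_{ip}t_{jq}-t_{iq}t_{jp}=c_{ij}d_{pq}$. In particular this determinant is a positive integer.
   Context: An $\mathrm{SL}_2$-tiling is a map $t:\mathbb{Z}\times\mathbb{Z}\to\{1,2,3,\dots\}$, $(i,j)\mapsto t_{ij}$, with $t_{ij}t_{i+1,j+1}-t_{i,j+1}t_{i+1,j}=1$ for all $i,j$. For integers $i<j$ and any integer $a$ put $c_{ij}=t_{ia}t_{j,a+1}-t_{i,a+1}t_{ja}$ and $d_{ij}=t_{ai}t_{a+1,j}-t_{aj}t_{a+1,i}$; these values do not depend on the choice of $a$ (a known fact about $\mathrm{SL}_2$-tilings). *)

theory Defs
  imports Main
begin

definition SL2_tiling :: "(int \<Rightarrow> int \<Rightarrow> int) \<Rightarrow> bool" where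
  "SL2_tiling t \<longleftrightarrow> (\<forall>i j. t i j \<ge> 1) \<and>
     (\<forall>i j. t i j * t (i+1) (j+1) - t i (j+1) * t (i+1) j = 1)"

text \<open>c_ij and d_ij, computed with the auxiliary index a = 0
  (the values are independent of a for SL2-tilings).\<close>
definition c_coef :: "(int \<Rightarrow> int \<Rightarrow> int) \<Rightarrow> int \<Rightarrow> int \<Rightarrow> int" where
  "c_coef t i j = t i 0 * t j 1 - t i 1 * t j 0"

definition d_coef :: "(int \<Rightarrow> int \<Rightarrow> int) \<Rightarrow> int \<Rightarrow> int \<Rightarrow> int" where
  "d_coef t i j = t 0 i * t 1 j - t 0 j * t 1 i"

end

theory Submission
  imports Defs
begin

lemma tpos: "SL2_tiling t \<Longrightarrow> t i j > 0"
proof -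
  assume "SL2_tiling t"
  then have "t i j \<ge> 1" unfolding SL2_tiling_def by blast
  then show ?thesis by simp
qed

lemma tdet: "SL2_tiling t \<Longrightarrow> t i j * t (i+1) (j+1) - t i (j+1) * t (i+1) j = 1"
  unfolding SL2_tiling_def by blast

lemma mul_cancel_lt:
  fixes a b c :: int
  assumes "c > 0" "a * c < b * c" shows "a < b"
  using assms by (simp add: mult_less_cancel_right)

lemma trans_rows:
  assumes T: "SL2_tiling t"
    and h1: "t i q * t j p < t i p * t j q" and h2: "t j q * t k p < t j p * t k q"
  shows "t i q * t k p < t i p * t k q"
proof -
  have pj: "t j p > 0" "t k p > 0" "t i p > 0" using tpos[OF T] by auto
  have "(t i q * t k p) * t j p = (t i q * t j p) * t k p" by (simp add: algebra_simps)
  also have "\<dots> < (t i p * t j q) * t k p" by (rule mult_strict_right_mono[OF h1 pj(2)])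
  also have "\<dots> = t i p * (t j q * t k p)" by (simp add: algebra_simps)
  also have "\<dots> < t i p * (t j p * t k q)" by (rule mult_strict_left_mono[OF h2 pj(3)])
  also have "\<dots> = (t i p * t k q) * t j p" by (simp add: algebra_simps)
  finally show ?thesis by (rule mul_cancel_lt[OF pj(1)])
qed

lemma trans_cols:
  assumes T: "SL2_tiling t"
    and h1: "t i q * t j p < t i p * t j q" and h2: "t i r * t j q < t i q * t j r"
  shows "t i r * t j p < t i p * t j r"
proof -
  have pj: "t i q > 0" "t j q > 0" "t i p > 0" "t j r > 0" "t j p > 0" using tpos[OF T] by auto
  have "(t i r * t j p) * (t i q * t j q) = (t i r * t j q) * (t i q * t j p)" by (simp add: algebra_simps)
  also have "\<dots> < (t i q * t j r) * (t i q * t j p)"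
    by (rule mult_strict_right_mono[OF h2 mult_pos_pos[OF pj(1) pj(5)]])
  also have "\<dots> = (t i q * t j p) * (t i q * t j r)" by (simp add: algebra_simps)
  also have "\<dots> < (t i p * t j q) * (t i q * t j r)"
    by (rule mult_strict_right_mono[OF h1 mult_pos_pos[OF pj(1) pj(4)]])
  also have "\<dots> = (t i p * t j r) * (t i q * t j q)" by (simp add: algebra_simps)
  finally show ?thesis by (rule mul_cancel_lt[OF mult_pos_pos[OF pj(1) pj(2)]])
qed

lemma pos_adj:
  assumes T: "SL2_tiling t" and "p < q"
  shows "t i q * t (i+1) p < t i p * t (i+1) q"
  using assms(2)
proof (induction q rule: int_gr_induct)
  case base
  then show ?case using tdet[OF T, of i p] by simp
next
  case (step q)
  have "t i (q+1) * t (i+1) q < t i q * t (i+1) (q+1)" using tdet[OF T, of i q] by simp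
  then show ?case using trans_cols[OF T step(2)] by blast
qed

lemma pos_all:
  assumes T: "SL2_tiling t" and "p < q" and "i < j"
  shows "t i q * t j p < t i p * t j q"
  using assms(3)
proof (induction j rule: int_gr_induct)
  case base
  then show ?case using pos_adj[OF T assms(2)] by simp
next
  case (step j)
  then show ?case using trans_rows[OF T step(2) pos_adj[OF T assms(2), of j]] by blast
qed

lemma L1:
  assumes T: "SL2_tiling t"
  shows "t i a * (t (i+1) (a+1) + t (i+1) (a-1)) = t (i+1) a * (t i (a+1) + t i (a-1))"
proof -
  have d1: "t i a * t (i+1) (a+1) - t i (a+1) * t (i+1) a = 1" using tdet[OF T] .
  have d2: "t i (a-1) * t (i+1) a - t i a * t (i+1) (a-1) = 1" using tdet[OF T, of i "a-1"] by simp
  from d1 d2 show ?thesis by (simp add: algebra_simps)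
qed

lemma cancel_pos:
  fixes x y c :: int assumes "c > 0" "x * c = y * c" shows "x = y"
  using assms by simp

lemma L2:
  assumes T: "SL2_tiling t"
  shows "t 0 a * (t k (a+1) + t k (a-1)) = t k a * (t 0 (a+1) + t 0 (a-1))"
proof (induction k rule: int_induct[where k=0])
  case base
  then show ?case by simp
next
  case (step1 k)
  let ?S = "\<lambda>k. t k (a+1) + t k (a-1)"
  have l: "t k a * ?S (k+1) = t (k+1) a * ?S k" using L1[OF T] .
  have "(t 0 a * ?S (k+1)) * t k a = t 0 a * (t k a * ?S (k+1))" by (simp add: algebra_simps)
  also have "\<dots> = t (k+1) a * (t 0 a * ?S k)" using l by (simp add: algebra_simps)
  also have "\<dots> = (t (k+1) a * ?S 0) * t k a" using step1(2) by (simp add: algebra_simps)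
  finally show ?case using tpos[OF T, of k a] by simp
next
  case (step2 k)
  let ?S = "\<lambda>k. t k (a+1) + t k (a-1)"
  have l: "t (k-1) a * ?S k = t k a * ?S (k-1)" using L1[OF T, of "k-1"] by simp
  have "(t 0 a * ?S (k-1)) * t k a = t 0 a * (t k a * ?S (k-1))" by (simp add: algebra_simps)
  also have "\<dots> = t 0 a * (t (k-1) a * ?S k)" using l by (simp only:)
  also have "\<dots> = t (k-1) a * (t 0 a * ?S k)" by (simp add: algebra_simps)
  also have "\<dots> = (t (k-1) a * ?S 0) * t k a" using step2(2) by (simp add: algebra_simps)
  finally show ?case using tpos[OF T, of k a] by simp
qed

lemma rec_zero:
  fixes h w s :: "int \<Rightarrow> int"
  assumes w: "\<And>p. w p \<noteq> 0" and r: "\<And>p. w p * (h (p+1) + h (p-1)) = s p * h p"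
    and h0: "h 0 = 0" and h1: "h 1 = 0"
  shows "h n = 0"
proof -
  have up: "h (int m) = 0 \<and> h (int m + 1) = 0" for m
  proof (induction m)
    case 0 then show ?case using h0 h1 by simp
  next
    case (Suc m)
    have "w (int m + 1) * (h (int m + 1 + 1) + h (int m + 1 - 1)) = s (int m + 1) * h (int m + 1)" by (rule r)
    with Suc w[of "int m + 1"] have h2: "h (int m + 1 + 1) = 0" by simp
    have e1: "int (Suc m) = int m + 1" by simp
    show ?case unfolding e1 using Suc h2 by (simp only: simp_thms)
  qed
  have down: "h (- int m) = 0 \<and> h (- int m + 1) = 0" for m
  proof (induction m)
    case 0 then show ?case using h0 h1 by simp
  next
    case (Suc m)
    have "w (- int m) * (h (- int m + 1) + h (- int m - 1)) = s (- int m) * h (- int m)" by (rule r)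
    with Suc w[of "- int m"] have h2: "h (- int m - 1) = 0" by simp
    have e1: "- int (Suc m) = - int m - 1" and e2: "- int m - 1 + 1 = - int m" by simp_all
    show ?case unfolding e1 e2 using Suc h2 by (simp only: simp_thms)
  qed
  show ?thesis
  proof (cases "n \<ge> 0")
    case True then show ?thesis using up[of "nat n"] by simp
  next
    case False then show ?thesis using down[of "nat (-n)"] by simp
  qed
qed

lemma decomp:
  assumes T: "SL2_tiling t"
  shows "t i p = (t i 0 * t 1 1 - t i 1 * t 1 0) * t 0 p + (t 0 0 * t i 1 - t 0 1 * t i 0) * t 1 p"
proof -
  define \<alpha> where "\<alpha> = t i 0 * t 1 1 - t i 1 * t 1 0"
  define \<beta> where "\<beta> = t 0 0 * t i 1 - t 0 1 * t i 0"
  define g where "g p = t i p - \<alpha> * t 0 p - \<beta> * t 1 p" for p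
  have D: "t 0 0 * t 1 1 - t 0 1 * t 1 0 = 1" using tdet[OF T, of 0 0] by simp
  have g0: "g 0 = 0"
  proof -
    have "g 0 = t i 0 * (1 - (t 0 0 * t 1 1 - t 0 1 * t 1 0))"
      unfolding g_def \<alpha>_def \<beta>_def by (simp add: algebra_simps)
    then show ?thesis using D by simp
  qed
  have g1: "g 1 = 0"
  proof -
    have "g 1 = t i 1 * (1 - (t 0 0 * t 1 1 - t 0 1 * t 1 0))"
      unfolding g_def \<alpha>_def \<beta>_def by (simp add: algebra_simps)
    then show ?thesis using D by simp
  qed
  have r: "t 0 p * (g (p+1) + g (p-1)) = (t 0 (p+1) + t 0 (p-1)) * g p" for p
  proof -
    have "t 0 p * (g (p+1) + g (p-1)) =
        t 0 p * (t i (p+1) + t i (p-1)) - \<alpha> * (t 0 p * (t 0 (p+1) + t 0 (p-1)))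
         - \<beta> * (t 0 p * (t 1 (p+1) + t 1 (p-1)))"
      unfolding g_def by (simp add: algebra_simps)
    also have "\<dots> = t i p * (t 0 (p+1) + t 0 (p-1)) - \<alpha> * (t 0 p * (t 0 (p+1) + t 0 (p-1)))
         - \<beta> * (t 1 p * (t 0 (p+1) + t 0 (p-1)))"
      using L2[OF T, of p i] L2[OF T, of p 1] by simp
    also have "\<dots> = (t 0 (p+1) + t 0 (p-1)) * g p" unfolding g_def by (simp add: algebra_simps)
    finally show ?thesis .
  qed
  have "g p = 0"
    by (rule rec_zero[where w="\<lambda>p. t 0 p" and s="\<lambda>p. t 0 (p+1) + t 0 (p-1)"])
       (use tpos[OF T] r g0 g1 in \<open>auto simp: less_le\<close>)
  then show ?thesis unfolding g_def \<alpha>_def \<beta>_def by simp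
qed

theorem proposition5p7:
  fixes t :: "int \<Rightarrow> int \<Rightarrow> int" and i j p q :: int
  assumes "SL2_tiling t" and "i < j" and "p < q"
  shows "t i p * t j q - t i q * t j p = c_coef t i j * d_coef t p q
         \<and> t i p * t j q - t i q * t j p > 0"
proof
  have D: "t 0 0 * t 1 1 - t 0 1 * t 1 0 = 1" using tdet[OF assms(1), of 0 0] by simp
  define ai where "ai = t i 0 * t 1 1 - t i 1 * t 1 0"
  define bi where "bi = t 0 0 * t i 1 - t 0 1 * t i 0"
  define aj where "aj = t j 0 * t 1 1 - t j 1 * t 1 0"
  define bj where "bj = t 0 0 * t j 1 - t 0 1 * t j 0"
  have e: "t k r = (if k = i then ai else aj) * t 0 r + (if k = i then bi else bj) * t 1 r"
    if "k = i \<or> k = j" for k r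
    using that decomp[OF assms(1), of k r] unfolding ai_def bi_def aj_def bj_def by auto
  have ij: "i \<noteq> j" using assms(2) by simp
  have lhs: "t i p * t j q - t i q * t j p = (ai * bj - aj * bi) * d_coef t p q"
    unfolding d_coef_def using e[of i p] e[of j q] e[of i q] e[of j p] ij
    by (simp add: algebra_simps)
  have c: "c_coef t i j = (ai * bj - aj * bi) * (t 0 0 * t 1 1 - t 0 1 * t 1 0)"
    unfolding c_coef_def using e[of i 0] e[of j 1] e[of i 1] e[of j 0] ij
    by (simp add: algebra_simps)
  show "t i p * t j q - t i q * t j p = c_coef t i j * d_coef t p q"
    using lhs c D by simp
  show "t i p * t j q - t i q * t j p > 0"
    using pos_all[OF assms(1) assms(3) assms(2)] by simp
qed

end
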